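(* Let $\Phi_0$ be a $\mathrm{Spin}(7)$-structure on an oriented $8$-manifold with metric $g$ and Hodge star $*$, and let $v,w$ be vector fields with $|v\wedge w|$ nowhere zero. The solution of \[ \frac{\partial}{\partial t}\Phi_t = w\lrcorner *(v\lrcorner\Phi_t) - v\lrcorner *(w\lrcorner\Phi_t) \] with initial value $\Phi_0$ is \[ \Phi(t) = \Phi_0 + \frac{1-\cos(|v\wedge w|t)}{|v\wedge w|^2}B^2\Phi_0 + \frac{\sin(|v\wedge w|t)}{|v\wedge w|}B\Phi_0, \] where $B\alpha = v\lrcorner(w^\flat\wedge\alpha) - w\lrcorner(v^\flat\wedge\alpha)$. The solution exists for all time and is a closed curve in $\wedge^4$.
   Context: A $\mathrm{Spin}(7)$-structure on an oriented $8$-manifold $M$ is a $4$-form $\Phi$ such that at each point $p$ there are local coordinates $x^0,\dots,x^7$ with $\Phi_p = dx^{0123} - dx^{0167} - dx^{0527} - dx^{0563} + dx^{0415} + dx^{0426} + dx^{0437} + dx^{4567} - dx^{4523} - dx^{4163} - dx^{4127} + dx^{2637} + dx^{1537} + dx^{1526}$. It determines a Riemannian metric $g$ (equal to $\sum_k dx^k\otimes dx^k$ at $p$), orientation and Hodge star $*$. $w^\flat=g(w,\cdot)$, and $|v\wedge w|$ is the norm of the bivector in $g$. *)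

theory Defs
  imports Complex_Main
begin

text \<open>Pointwise model of the tangent space T_pM at a point p, in the coordinates
x^0..x^7 given by the definition of a Spin(7)-structure: there g is the Euclidean
metric sum dx^k (x) dx^k and the orientation is dx^01234567.
A vector is a function nat => real (only indices 0..7 matter).
A form (element of the exterior algebra of T_p^*M) is encoded by its coefficient
function on subsets I of {0..<8}: the coefficient of dx^I, where dx^I is the
wedge of dx^i for i in I in increasing order.  Coefficients at sets not contained
in {0..<8} are irrelevant (all operations below produce 0 there).\<close>

type_synonym form = "nat set \<Rightarrow> real"

definition idx8 :: "nat set" where "idx8 = {0..<8}"

text \<open>sign of shuffling dx^I wedge dx^J into increasing order\<close>
definition sgn_pair :: "nat set \<Rightarrow> nat set \<Rightarrow> real" where
  "sgn_pair I J = (-1) ^ card {(i, j). i \<in> I \<and> j \<in> J \<and> j < i}"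

definition form_add :: "form \<Rightarrow> form \<Rightarrow> form" where
  "form_add \<alpha> \<beta> = (\<lambda>I. \<alpha> I + \<beta> I)"

definition form_diff :: "form \<Rightarrow> form \<Rightarrow> form" where
  "form_diff \<alpha> \<beta> = (\<lambda>I. \<alpha> I - \<beta> I)"

definition form_scale :: "real \<Rightarrow> form \<Rightarrow> form" where
  "form_scale c \<alpha> = (\<lambda>I. c * \<alpha> I)"

definition wedge :: "form \<Rightarrow> form \<Rightarrow> form" where
  "wedge \<alpha> \<beta> = (\<lambda>K. if K \<subseteq> idx8
      then (\<Sum>I\<in>Pow K. sgn_pair I (K - I) * \<alpha> I * \<beta> (K - I)) else 0)"

text \<open>interior product v contracted into the first slot\<close>
definition interior :: "(nat \<Rightarrow> real) \<Rightarrow> form \<Rightarrow> form" where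
  "interior v \<alpha> = (\<lambda>I. if I \<subseteq> idx8
      then (\<Sum>j\<in>idx8 - I. v j * sgn_pair {j} I * \<alpha> (insert j I)) else 0)"

definition hodge :: "form \<Rightarrow> form" where
  "hodge \<alpha> = (\<lambda>J. if J \<subseteq> idx8 then sgn_pair (idx8 - J) J * \<alpha> (idx8 - J) else 0)"

definition dx1 :: "nat \<Rightarrow> form" where
  "dx1 i = (\<lambda>I. if I = {i} \<and> i < 8 then 1 else 0)"

definition form_one :: form where
  "form_one = (\<lambda>I. if I = {} then 1 else 0)"

definition dxl :: "nat list \<Rightarrow> form" where
  "dxl is = foldr (\<lambda>i acc. wedge (dx1 i) acc) is form_one"

definition flat :: "(nat \<Rightarrow> real) \<Rightarrow> form" where
  "flat v = (\<lambda>I. \<Sum>i\<in>idx8. v i * dx1 i I)"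

definition form_norm :: "form \<Rightarrow> real" where
  "form_norm \<alpha> = sqrt (\<Sum>I\<in>Pow idx8. (\<alpha> I)^2)"

definition spin7_form :: form where
  "spin7_form = (\<lambda>I.
       dxl [0,1,2,3] I - dxl [0,1,6,7] I - dxl [0,5,2,7] I - dxl [0,5,6,3] I
     + dxl [0,4,1,5] I + dxl [0,4,2,6] I + dxl [0,4,3,7] I + dxl [4,5,6,7] I
     - dxl [4,5,2,3] I - dxl [4,1,6,3] I - dxl [4,1,2,7] I + dxl [2,6,3,7] I
     + dxl [1,5,3,7] I + dxl [1,5,2,6] I)"

definition flow_rhs :: "(nat \<Rightarrow> real) \<Rightarrow> (nat \<Rightarrow> real) \<Rightarrow> form \<Rightarrow> form" where
  "flow_rhs v w \<alpha> = form_diff (interior w (hodge (interior v \<alpha>)))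
                               (interior v (hodge (interior w \<alpha>)))"

definition opB :: "(nat \<Rightarrow> real) \<Rightarrow> (nat \<Rightarrow> real) \<Rightarrow> form \<Rightarrow> form" where
  "opB v w \<alpha> = form_diff (interior v (wedge (flat w) \<alpha>))
                          (interior w (wedge (flat v) \<alpha>))"

definition biv_norm :: "(nat \<Rightarrow> real) \<Rightarrow> (nat \<Rightarrow> real) \<Rightarrow> real" where
  "biv_norm v w = form_norm (wedge (flat v) (flat w))"

end

theory Submission
  imports Defs "HOL-Library.Function_Algebras"
begin

definition sg :: "nat \<Rightarrow> nat set \<Rightarrow> real" where
  "sg j I = (-1) ^ card {i \<in> I. i < j}"

lemma sgn_pair_single: "sgn_pair {j} I = sg j I"
proof -
  have "{(i, j'). i \<in> {j} \<and> j' \<in> I \<and> j' < i} = (\<lambda>x. (j, x)) ` {i \<in> I. i < j}" by auto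
  moreover have "inj_on (\<lambda>x. (j, x)) {i \<in> I. i < j}" by (auto simp: inj_on_def)
  ultimately show ?thesis unfolding sgn_pair_def sg_def by (simp add: card_image)
qed

lemma sg_insert: "finite I \<Longrightarrow> k \<notin> I \<Longrightarrow> sg j (insert k I) = (if k < j then - sg j I else sg j I)"
proof -
  assume f: "finite I" and k: "k \<notin> I"
  show ?thesis
  proof (cases "k < j")
    case True
    have "{i \<in> insert k I. i < j} = insert k {i \<in> I. i < j}" using True by auto
    then show ?thesis using True f k by (simp add: sg_def)
  next
    case False
    have "{i \<in> insert k I. i < j} = {i \<in> I. i < j}" using False by auto
    then show ?thesis using False by (simp add: sg_def)
  qed
qed

lemma sg_sq: "sg j I * sg j I = 1"
  by (simp add: sg_def power_mult_distrib[symmetric])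

lemma idx8_finite[simp]: "finite idx8" by (simp add: idx8_def)

lemma flat_single: "k < 8 \<Longrightarrow> flat a {k} = a k"
proof -
  assume k: "k < 8"
  have "flat a {k} = (\<Sum>i\<in>idx8. if i = k then a i else 0)"
    unfolding flat_def dx1_def by (rule sum.cong) (auto simp: idx8_def)
  also have "\<dots> = a k" using k by (simp add: idx8_def)
  finally show ?thesis .
qed

lemma flat_nonsingle: "(\<And>k. k < 8 \<Longrightarrow> J \<noteq> {k}) \<Longrightarrow> flat a J = 0"
  unfolding flat_def dx1_def by (auto intro!: sum.neutral simp: idx8_def)

lemma wedge_flat: "wedge (flat a) \<alpha> K = (if K \<subseteq> idx8 then
     (\<Sum>i\<in>K. a i * sg i (K - {i}) * \<alpha> (K - {i})) else 0)"
proof (cases "K \<subseteq> idx8")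
  case True
  have fK: "finite K" using True finite_subset idx8_finite by blast
  have "(\<Sum>I\<in>Pow K. sgn_pair I (K - I) * flat a I * \<alpha> (K - I))
      = (\<Sum>I\<in>(\<lambda>i. {i}) ` K. sgn_pair I (K - I) * flat a I * \<alpha> (K - I))"
  proof (rule sum.mono_neutral_right)
    show "finite (Pow K)" using fK by simp
    show "(\<lambda>i. {i}) ` K \<subseteq> Pow K" by auto
    show "\<forall>i\<in>Pow K - (\<lambda>i. {i}) ` K. sgn_pair i (K - i) * flat a i * \<alpha> (K - i) = 0"
    proof
      fix J assume J: "J \<in> Pow K - (\<lambda>i. {i}) ` K"
      have "flat a J = 0" by (rule flat_nonsingle) (use J in auto)
      then show "sgn_pair J (K - J) * flat a J * \<alpha> (K - J) = 0" by simp
    qed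
  qed
  also have "\<dots> = (\<Sum>i\<in>K. sgn_pair {i} (K - {i}) * flat a {i} * \<alpha> (K - {i}))"
    by (subst sum.reindex) (auto simp: inj_on_def)
  also have "\<dots> = (\<Sum>i\<in>K. a i * sg i (K - {i}) * \<alpha> (K - {i}))"
    by (rule sum.cong) (use True in \<open>auto simp: sgn_pair_single flat_single idx8_def\<close>)
  finally show ?thesis using True by (simp add: wedge_def)
qed (simp add: wedge_def)

lemma interior_sg: "interior v \<alpha> I = (if I \<subseteq> idx8 then
     (\<Sum>j\<in>idx8 - I. v j * sg j I * \<alpha> (insert j I)) else 0)"
  by (simp add: interior_def sgn_pair_single)

definition dotp :: "(nat \<Rightarrow> real) \<Rightarrow> (nat \<Rightarrow> real) \<Rightarrow> real" where
  "dotp v a = (\<Sum>j\<in>idx8. v j * a j)"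

lemma sg_cross:
  assumes f: "finite I" and i: "i \<in> I" and j: "j \<notin> I"
  shows "sg j I * sg i (insert j (I - {i})) + sg i (I - {i}) * sg j (I - {i}) = 0"
proof -
  have ij: "i \<noteq> j" using i j by auto
  have e1: "sg j I = (if i < j then - sg j (I - {i}) else sg j (I - {i}))"
    using sg_insert[of "I - {i}" i j] f i by (simp add: insert_absorb)
  have e2: "sg i (insert j (I - {i})) = (if j < i then - sg i (I - {i}) else sg i (I - {i}))"
    using sg_insert[of "I - {i}" j i] f j by simp
  show ?thesis using ij by (cases "i < j") (auto simp: e1 e2)
qed

lemma CAR_pt:
  "interior v (wedge (flat a) \<alpha>) I + wedge (flat a) (interior v \<alpha>) I
     = (if I \<subseteq> idx8 then dotp v a * \<alpha> I else 0)"
proof (cases "I \<subseteq> idx8")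
  case False
  then show ?thesis by (simp add: interior_sg wedge_flat)
next
  case True
  define U where "U = idx8 - I"
  have fI: "finite I" using True finite_subset idx8_finite by blast
  have fU: "finite U" by (simp add: U_def)
  have L1: "interior v (wedge (flat a) \<alpha>) I =
     (\<Sum>j\<in>U. v j * a j * \<alpha> I) +
     (\<Sum>j\<in>U. \<Sum>i\<in>I. v j * a i * (sg j I * sg i (insert j (I - {i}))) * \<alpha> (insert j (I - {i})))"
  proof -
    have "interior v (wedge (flat a) \<alpha>) I = (\<Sum>j\<in>U. v j * sg j I * wedge (flat a) \<alpha> (insert j I))"
      using True by (simp add: interior_sg U_def)
    also have "\<dots> = (\<Sum>j\<in>U. v j * a j * \<alpha> I +
          (\<Sum>i\<in>I. v j * a i * (sg j I * sg i (insert j (I - {i}))) * \<alpha> (insert j (I - {i}))))"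
    proof (rule sum.cong[OF refl])
      fix j assume jU: "j \<in> U"
      have jI: "j \<notin> I" and j8: "j \<in> idx8" using jU by (auto simp: U_def)
      have "wedge (flat a) \<alpha> (insert j I) = (\<Sum>i\<in>insert j I. a i * sg i (insert j I - {i}) * \<alpha> (insert j I - {i}))"
        using True j8 by (simp add: wedge_flat)
      also have "\<dots> = a j * sg j I * \<alpha> I + (\<Sum>i\<in>I. a i * sg i (insert j (I - {i})) * \<alpha> (insert j (I - {i})))"
      proof -
        have "(\<Sum>i\<in>I. a i * sg i (insert j I - {i}) * \<alpha> (insert j I - {i}))
            = (\<Sum>i\<in>I. a i * sg i (insert j (I - {i})) * \<alpha> (insert j (I - {i})))"
          by (rule sum.cong[OF refl]) (use jI in \<open>auto simp: insert_Diff_if\<close>)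
        moreover have "insert j I - {j} = I" using jI by auto
        ultimately show ?thesis using fI jI by simp
      qed
      finally have "v j * sg j I * wedge (flat a) \<alpha> (insert j I) =
          v j * sg j I * (a j * sg j I * \<alpha> I + (\<Sum>i\<in>I. a i * sg i (insert j (I - {i})) * \<alpha> (insert j (I - {i}))))"
        by simp
      also have "\<dots> = v j * a j * (sg j I * sg j I) * \<alpha> I +
          (\<Sum>i\<in>I. v j * a i * (sg j I * sg i (insert j (I - {i}))) * \<alpha> (insert j (I - {i})))"
        by (simp add: algebra_simps sum_distrib_left)
      finally show "v j * sg j I * wedge (flat a) \<alpha> (insert j I) = v j * a j * \<alpha> I +
          (\<Sum>i\<in>I. v j * a i * (sg j I * sg i (insert j (I - {i}))) * \<alpha> (insert j (I - {i})))"
        by (simp add: sg_sq)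
    qed
    also have "\<dots> = (\<Sum>j\<in>U. v j * a j * \<alpha> I) +
     (\<Sum>j\<in>U. \<Sum>i\<in>I. v j * a i * (sg j I * sg i (insert j (I - {i}))) * \<alpha> (insert j (I - {i})))"
      by (simp add: sum.distrib)
    finally show ?thesis .
  qed
  have L2: "wedge (flat a) (interior v \<alpha>) I =
     (\<Sum>i\<in>I. v i * a i * \<alpha> I) +
     (\<Sum>j\<in>U. \<Sum>i\<in>I. v j * a i * (sg i (I - {i}) * sg j (I - {i})) * \<alpha> (insert j (I - {i})))"
  proof -
    have "wedge (flat a) (interior v \<alpha>) I = (\<Sum>i\<in>I. a i * sg i (I - {i}) * interior v \<alpha> (I - {i}))"
      using True by (simp add: wedge_flat)
    also have "\<dots> = (\<Sum>i\<in>I. v i * a i * \<alpha> I +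
          (\<Sum>j\<in>U. v j * a i * (sg i (I - {i}) * sg j (I - {i})) * \<alpha> (insert j (I - {i}))))"
    proof (rule sum.cong[OF refl])
      fix i assume iI: "i \<in> I"
      have i8: "i \<in> idx8" using iI True by auto
      have e: "idx8 - (I - {i}) = insert i U" using iI True by (auto simp: U_def)
      have iU: "i \<notin> U" using iI by (simp add: U_def)
      have "interior v \<alpha> (I - {i}) = (\<Sum>j\<in>insert i U. v j * sg j (I - {i}) * \<alpha> (insert j (I - {i})))"
        using True e by (auto simp: interior_sg)
      also have "\<dots> = v i * sg i (I - {i}) * \<alpha> I + (\<Sum>j\<in>U. v j * sg j (I - {i}) * \<alpha> (insert j (I - {i})))"
        using fU iU iI by (simp add: insert_absorb)
      finally have "a i * sg i (I - {i}) * interior v \<alpha> (I - {i}) =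
          a i * sg i (I - {i}) * (v i * sg i (I - {i}) * \<alpha> I + (\<Sum>j\<in>U. v j * sg j (I - {i}) * \<alpha> (insert j (I - {i}))))"
        by simp
      also have "\<dots> = v i * a i * (sg i (I - {i}) * sg i (I - {i})) * \<alpha> I +
          (\<Sum>j\<in>U. v j * a i * (sg i (I - {i}) * sg j (I - {i})) * \<alpha> (insert j (I - {i})))"
        by (simp add: algebra_simps sum_distrib_left)
      finally show "a i * sg i (I - {i}) * interior v \<alpha> (I - {i}) = v i * a i * \<alpha> I +
          (\<Sum>j\<in>U. v j * a i * (sg i (I - {i}) * sg j (I - {i})) * \<alpha> (insert j (I - {i})))"
        by (simp add: sg_sq)
    qed
    also have "\<dots> = (\<Sum>i\<in>I. v i * a i * \<alpha> I) +
     (\<Sum>i\<in>I. \<Sum>j\<in>U. v j * a i * (sg i (I - {i}) * sg j (I - {i})) * \<alpha> (insert j (I - {i})))"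
      by (simp add: sum.distrib)
    also have "(\<Sum>i\<in>I. \<Sum>j\<in>U. v j * a i * (sg i (I - {i}) * sg j (I - {i})) * \<alpha> (insert j (I - {i})))
      = (\<Sum>j\<in>U. \<Sum>i\<in>I. v j * a i * (sg i (I - {i}) * sg j (I - {i})) * \<alpha> (insert j (I - {i})))"
      by (rule sum.swap)
    finally show ?thesis .
  qed
  have cross: "(\<Sum>j\<in>U. \<Sum>i\<in>I. v j * a i * (sg j I * sg i (insert j (I - {i}))) * \<alpha> (insert j (I - {i})))
     + (\<Sum>j\<in>U. \<Sum>i\<in>I. v j * a i * (sg i (I - {i}) * sg j (I - {i})) * \<alpha> (insert j (I - {i}))) = 0"
  proof -
    have "\<And>j i. j \<in> U \<Longrightarrow> i \<in> I \<Longrightarrow>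
       v j * a i * (sg j I * sg i (insert j (I - {i}))) * \<alpha> (insert j (I - {i}))
     + v j * a i * (sg i (I - {i}) * sg j (I - {i})) * \<alpha> (insert j (I - {i})) = 0"
    proof -
      fix j i assume "j \<in> U" "i \<in> I"
      then have "sg j I * sg i (insert j (I - {i})) + sg i (I - {i}) * sg j (I - {i}) = 0"
        using sg_cross fI by (auto simp: U_def)
      then show "v j * a i * (sg j I * sg i (insert j (I - {i}))) * \<alpha> (insert j (I - {i}))
     + v j * a i * (sg i (I - {i}) * sg j (I - {i})) * \<alpha> (insert j (I - {i})) = 0"
        by (metis (no_types, lifting) distrib_left distrib_right mult_zero_left mult_zero_right)
    qed
    then show ?thesis by (simp add: sum.distrib[symmetric])
  qed
  have diag: "(\<Sum>j\<in>U. v j * a j * \<alpha> I) + (\<Sum>i\<in>I. v i * a i * \<alpha> I) = dotp v a * \<alpha> I"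
  proof -
    have e: "idx8 = U \<union> I" and d: "U \<inter> I = {}" using True by (auto simp: U_def)
    have "(\<Sum>j\<in>idx8. v j * a j * \<alpha> I) = (\<Sum>j\<in>U. v j * a j * \<alpha> I) + (\<Sum>i\<in>I. v i * a i * \<alpha> I)"
      unfolding e by (rule sum.union_disjoint[OF fU fI d])
    then show ?thesis by (simp add: dotp_def sum_distrib_right)
  qed
  show ?thesis using True L1 L2 cross diag by simp
qed

lemma sum_remove_if: "finite U \<Longrightarrow> (\<Sum>k\<in>U - {j}. f k) = (\<Sum>k\<in>U. if k = j then 0 else f k)"
  by (rule sum.mono_neutral_cong_left) auto

lemma sum_neg_swap:
  fixes f g :: "nat \<Rightarrow> nat \<Rightarrow> real"
  assumes "\<And>j k. j \<in> U \<Longrightarrow> k \<in> U \<Longrightarrow> f j k = - g k j"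
  shows "(\<Sum>j\<in>U. \<Sum>k\<in>U. f j k) = - (\<Sum>k\<in>U. \<Sum>j\<in>U. g k j)"
proof -
  have "(\<Sum>j\<in>U. \<Sum>k\<in>U. f j k) = (\<Sum>j\<in>U. \<Sum>k\<in>U. - g k j)"
    using assms by (auto intro!: sum.cong)
  also have "\<dots> = - (\<Sum>j\<in>U. \<Sum>k\<in>U. g k j)" by (simp add: sum_negf)
  also have "(\<Sum>j\<in>U. \<Sum>k\<in>U. g k j) = (\<Sum>k\<in>U. \<Sum>j\<in>U. g k j)" by (rule sum.swap)
  finally show ?thesis .
qed

lemma int_anti_pt: "interior v (interior w \<alpha>) I = - interior w (interior v \<alpha>) I"
proof (cases "I \<subseteq> idx8")
  case False then show ?thesis by (simp add: interior_sg)
next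
  case True
  define U where "U = idx8 - I"
  have fI: "finite I" using True finite_subset idx8_finite by blast
  have fU: "finite U" by (simp add: U_def)
  have ex: "\<And>v w. interior v (interior w \<alpha>) I = (\<Sum>j\<in>U. \<Sum>k\<in>U. if k = j then 0 else
     v j * w k * (sg j I * sg k (insert j I)) * \<alpha> (insert k (insert j I)))"
  proof -
    fix v w
    have "interior v (interior w \<alpha>) I = (\<Sum>j\<in>U. v j * sg j I * interior w \<alpha> (insert j I))"
      using True by (simp add: interior_sg U_def)
    also have "\<dots> = (\<Sum>j\<in>U. \<Sum>k\<in>U. if k = j then 0 else
     v j * w k * (sg j I * sg k (insert j I)) * \<alpha> (insert k (insert j I)))"
    proof (rule sum.cong[OF refl])
      fix j assume j: "j \<in> U"
      have e: "idx8 - insert j I = U - {j}" by (auto simp: U_def)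
      have "interior w \<alpha> (insert j I) = (\<Sum>k\<in>U - {j}. w k * sg k (insert j I) * \<alpha> (insert k (insert j I)))"
        using True j e by (simp add: interior_sg U_def)
      then show "v j * sg j I * interior w \<alpha> (insert j I) = (\<Sum>k\<in>U. if k = j then 0 else
         v j * w k * (sg j I * sg k (insert j I)) * \<alpha> (insert k (insert j I)))"
        using fU by (simp add: sum_remove_if sum_distrib_left if_distrib algebra_simps cong: if_cong)
    qed
    finally show "interior v (interior w \<alpha>) I = (\<Sum>j\<in>U. \<Sum>k\<in>U. if k = j then 0 else
     v j * w k * (sg j I * sg k (insert j I)) * \<alpha> (insert k (insert j I)))" .
  qed
  show ?thesis unfolding ex
  proof (rule sum_neg_swap)
    fix j k assume j: "j \<in> U" and k: "k \<in> U"
    show "(if k = j then 0 else v j * w k * (sg j I * sg k (insert j I)) * \<alpha> (insert k (insert j I))) =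
      - (if j = k then 0 else w k * v j * (sg k I * sg j (insert k I)) * \<alpha> (insert j (insert k I)))"
    proof (cases "k = j")
      case False
      have jI: "j \<notin> I" and kI: "k \<notin> I" using j k by (auto simp: U_def)
      have "sg k (insert j I) = (if j < k then - sg k I else sg k I)" using sg_insert fI jI by blast
      moreover have "sg j (insert k I) = (if k < j then - sg j I else sg j I)" using sg_insert fI kI by blast
      ultimately show ?thesis using False by (cases "j < k") (auto simp: insert_commute algebra_simps)
    qed simp
  qed
qed

lemma wedge_anti_pt: "wedge (flat a) (wedge (flat b) \<alpha>) K = - wedge (flat b) (wedge (flat a) \<alpha>) K"
proof (cases "K \<subseteq> idx8")
  case False then show ?thesis by (simp add: wedge_flat)
next
  case True
  have fK: "finite K" using True finite_subset idx8_finite by blast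
  have ex: "\<And>a b. wedge (flat a) (wedge (flat b) \<alpha>) K = (\<Sum>i\<in>K. \<Sum>j\<in>K. if j = i then 0 else
     a i * b j * (sg i (K - {i}) * sg j (K - {i} - {j})) * \<alpha> (K - {i} - {j}))"
  proof -
    fix a b
    have "wedge (flat a) (wedge (flat b) \<alpha>) K = (\<Sum>i\<in>K. a i * sg i (K - {i}) * wedge (flat b) \<alpha> (K - {i}))"
      using True by (simp add: wedge_flat)
    also have "\<dots> = (\<Sum>i\<in>K. \<Sum>j\<in>K. if j = i then 0 else
     a i * b j * (sg i (K - {i}) * sg j (K - {i} - {j})) * \<alpha> (K - {i} - {j}))"
    proof (rule sum.cong[OF refl])
      fix i assume i: "i \<in> K"
      have "wedge (flat b) \<alpha> (K - {i}) = (\<Sum>j\<in>K - {i}. b j * sg j (K - {i} - {j}) * \<alpha> (K - {i} - {j}))"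
        using True by (auto simp: wedge_flat)
      then show "a i * sg i (K - {i}) * wedge (flat b) \<alpha> (K - {i}) = (\<Sum>j\<in>K. if j = i then 0 else
         a i * b j * (sg i (K - {i}) * sg j (K - {i} - {j})) * \<alpha> (K - {i} - {j}))"
        using fK by (simp add: sum_remove_if sum_distrib_left if_distrib algebra_simps cong: if_cong)
    qed
    finally show "wedge (flat a) (wedge (flat b) \<alpha>) K = (\<Sum>i\<in>K. \<Sum>j\<in>K. if j = i then 0 else
     a i * b j * (sg i (K - {i}) * sg j (K - {i} - {j})) * \<alpha> (K - {i} - {j}))" .
  qed
  show ?thesis unfolding ex
  proof (rule sum_neg_swap)
    fix i j assume i: "i \<in> K" and j: "j \<in> K"
    show "(if j = i then 0 else a i * b j * (sg i (K - {i}) * sg j (K - {i} - {j})) * \<alpha> (K - {i} - {j})) =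
      - (if i = j then 0 else b j * a i * (sg j (K - {j}) * sg i (K - {j} - {i})) * \<alpha> (K - {j} - {i}))"
    proof (cases "j = i")
      case False
      define R where "R = K - {i} - {j}"
      have fR: "finite R" using fK by (simp add: R_def)
      have e1: "K - {i} = insert j R" and e2: "K - {j} = insert i R" and e3: "K - {j} - {i} = R"
        using i j False by (auto simp: R_def)
      have iR: "i \<notin> R" and jR: "j \<notin> R" by (auto simp: R_def)
      have "sg i (insert j R) = (if j < i then - sg i R else sg i R)" using sg_insert fR jR by blast
      moreover have "sg j (insert i R) = (if i < j then - sg j R else sg j R)" using sg_insert fR iR by blast
      ultimately show ?thesis using False iR jR unfolding e3 e1 e2 R_def[symmetric]
        by (cases "j < i") (auto simp: algebra_simps)
    qed simp
  qed
qed

definition sgg :: "nat \<Rightarrow> nat set \<Rightarrow> real" where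
  "sgg j A = (-1) ^ card {a \<in> A. j < a}"

definition hom :: "nat \<Rightarrow> form \<Rightarrow> bool" where
  "hom k \<alpha> \<longleftrightarrow> (\<forall>I. \<alpha> I \<noteq> 0 \<longrightarrow> card I = k \<and> I \<subseteq> idx8)"

lemma sp_insert_left:
  assumes fA: "finite A" and fC: "finite C" and k: "k \<notin> A"
  shows "sgn_pair (insert k A) C = sgn_pair A C * sg k C"
proof -
  let ?S = "{(i, j). i \<in> A \<and> j \<in> C \<and> j < i}"
  let ?T = "Pair k ` {c \<in> C. c < k}"
  have e: "{(i, j). i \<in> insert k A \<and> j \<in> C \<and> j < i} = ?S \<union> ?T" by auto
  have d: "?S \<inter> ?T = {}" using k by auto
  have fS: "finite ?S" by (rule finite_subset[of _ "A \<times> C"]) (use fA fC in auto)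
  have fT: "finite ?T" using fC by simp
  have cT: "card ?T = card {c \<in> C. c < k}" by (rule card_image) (auto simp: inj_on_def)
  show ?thesis unfolding sgn_pair_def sg_def e
    by (simp add: card_Un_disjoint[OF fS fT d] cT power_add)
qed

lemma sp_insert_right:
  assumes fA: "finite A" and fC: "finite C" and k: "k \<notin> C"
  shows "sgn_pair A (insert k C) = sgn_pair A C * sgg k A"
proof -
  let ?S = "{(i, j). i \<in> A \<and> j \<in> C \<and> j < i}"
  let ?T = "(\<lambda>a. (a, k)) ` {a \<in> A. k < a}"
  have e: "{(i, j). i \<in> A \<and> j \<in> insert k C \<and> j < i} = ?S \<union> ?T" by auto
  have d: "?S \<inter> ?T = {}" using k by auto
  have fS: "finite ?S" by (rule finite_subset[of _ "A \<times> C"]) (use fA fC in auto)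
  have fT: "finite ?T" using fA by simp
  have cT: "card ?T = card {a \<in> A. k < a}" by (rule card_image) (auto simp: inj_on_def)
  show ?thesis unfolding sgn_pair_def sgg_def e
    by (simp add: card_Un_disjoint[OF fS fT d] cT power_add)
qed

lemma sg_sgg:
  assumes fA: "finite A" and k: "k \<notin> A"
  shows "sg k A * sgg k A = (-1) ^ card A"
proof -
  have e: "A = {a \<in> A. a < k} \<union> {a \<in> A. k < a}" using k nat_neq_iff by auto
  have "card A = card {a \<in> A. a < k} + card {a \<in> A. k < a}"
    by (subst e, rule card_Un_disjoint) (use fA in auto)
  then show ?thesis by (simp add: sg_def sgg_def power_add)
qed

lemma sg_pm: "sg k A = 1 \<or> sg k A = -1"
  unfolding sg_def by (metis neg_one_even_power neg_one_odd_power)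
lemma sgg_pm: "sgg k A = 1 \<or> sgg k A = -1"
  unfolding sgg_def by (metis neg_one_even_power neg_one_odd_power)

lemma hodge_interior:
  assumes h: "hom k \<alpha>"
  shows "hodge (interior v \<alpha>) J = (-1) ^ (k - 1) * wedge (flat v) (hodge \<alpha>) J"
proof (cases "J \<subseteq> idx8")
  case False then show ?thesis by (simp add: hodge_def wedge_flat)
next
  case True
  define C where "C = idx8 - J"
  have fJ: "finite J" using True finite_subset idx8_finite by blast
  have fC: "finite C" by (simp add: C_def)
  have eC: "idx8 - C = J" using True by (auto simp: C_def)
  have C8: "C \<subseteq> idx8" by (auto simp: C_def)
  have "hodge (interior v \<alpha>) J = sgn_pair C J * (\<Sum>j\<in>J. v j * sg j C * \<alpha> (insert j C))"
    using True C8 eC by (simp add: hodge_def interior_sg C_def[symmetric])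
  also have "\<dots> = (\<Sum>j\<in>J. sgn_pair C J * v j * sg j C * \<alpha> (insert j C))"
    by (simp add: sum_distrib_left algebra_simps)
  also have "\<dots> = (\<Sum>j\<in>J. (-1) ^ (k - 1) * (v j * sg j (J - {j}) * sgn_pair (insert j C) (J - {j}) * \<alpha> (insert j C)))"
  proof (rule sum.cong[OF refl])
    fix j assume j: "j \<in> J"
    define D where "D = J - {j}"
    have fD: "finite D" using fJ by (simp add: D_def)
    have jC: "j \<notin> C" using j by (simp add: C_def)
    have jD: "j \<notin> D" by (simp add: D_def)
    have JD: "J = insert j D" using j by (auto simp: D_def)
    have s1: "sgn_pair C J = sgn_pair C D * sgg j C"
      unfolding JD by (rule sp_insert_right[OF fC fD jD])
    have s2: "sgn_pair (insert j C) D = sgn_pair C D * sg j D"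
      by (rule sp_insert_left[OF fC fD jC])
    have s3: "sg j C * sgg j C = (-1) ^ card C" by (rule sg_sgg[OF fC jC])
    show "sgn_pair C J * v j * sg j C * \<alpha> (insert j C) =
      (-1) ^ (k - 1) * (v j * sg j (J - {j}) * sgn_pair (insert j C) (J - {j}) * \<alpha> (insert j C))"
    proof (cases "\<alpha> (insert j C) = 0")
      case False
      then have "card (insert j C) = k" using h by (auto simp: hom_def)
      then have ck: "card C = k - 1" using fC jC by simp
      have a1: "sgn_pair C J * sg j C = sgn_pair C D * (-1) ^ (k - 1)"
        by (metis s1 s3 ck mult.assoc mult.commute)
      have a2: "sg j D * sgn_pair (insert j C) D = sgn_pair C D"
        by (metis s2 sg_sq mult.assoc mult.commute mult_1_right)
      have "sgn_pair C J * v j * sg j C * \<alpha> (insert j C) = v j * \<alpha> (insert j C) * (sgn_pair C J * sg j C)"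
        by (simp add: algebra_simps)
      also have "\<dots> = (-1) ^ (k - 1) * (v j * \<alpha> (insert j C) * (sg j D * sgn_pair (insert j C) D))"
        unfolding a1 a2 by (simp add: algebra_simps)
      also have "\<dots> = (-1) ^ (k - 1) * (v j * sg j (J - {j}) * sgn_pair (insert j C) (J - {j}) * \<alpha> (insert j C))"
        by (simp add: D_def algebra_simps)
      finally show ?thesis .
    qed simp
  qed
  also have "\<dots> = (-1) ^ (k - 1) * (\<Sum>j\<in>J. v j * sg j (J - {j}) * hodge \<alpha> (J - {j}))"
  proof -
    have "\<And>j. j \<in> J \<Longrightarrow> hodge \<alpha> (J - {j}) = sgn_pair (insert j C) (J - {j}) * \<alpha> (insert j C)"
    proof -
      fix j assume j: "j \<in> J"
      have "idx8 - (J - {j}) = insert j C" using j True by (auto simp: C_def)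
      then show "hodge \<alpha> (J - {j}) = sgn_pair (insert j C) (J - {j}) * \<alpha> (insert j C)"
        using True by (auto simp: hodge_def)
    qed
    then show ?thesis by (simp add: sum_distrib_left algebra_simps)
  qed
  also have "\<dots> = (-1) ^ (k - 1) * wedge (flat v) (hodge \<alpha>) J"
    using True by (simp add: wedge_flat)
  finally show ?thesis .
qed

lemma hodge_wedge:
  assumes h: "hom k \<beta>"
  shows "hodge (wedge (flat v) \<beta>) J = (-1) ^ k * interior v (hodge \<beta>) J"
proof (cases "J \<subseteq> idx8")
  case False then show ?thesis by (simp add: hodge_def interior_sg)
next
  case True
  define C where "C = idx8 - J"
  have fJ: "finite J" using True finite_subset idx8_finite by blast
  have fC: "finite C" by (simp add: C_def)
  have C8: "C \<subseteq> idx8" by (auto simp: C_def)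
  have "hodge (wedge (flat v) \<beta>) J = sgn_pair C J * (\<Sum>i\<in>C. v i * sg i (C - {i}) * \<beta> (C - {i}))"
    using True C8 by (simp add: hodge_def wedge_flat C_def[symmetric])
  also have "\<dots> = (\<Sum>j\<in>C. sgn_pair C J * v j * sg j (C - {j}) * \<beta> (C - {j}))"
    by (simp add: sum_distrib_left algebra_simps)
  also have "\<dots> = (\<Sum>j\<in>C. (-1) ^ k * (v j * sg j J * sgn_pair (C - {j}) (insert j J) * \<beta> (C - {j})))"
  proof (rule sum.cong[OF refl])
    fix j assume j: "j \<in> C"
    define A where "A = C - {j}"
    have fA: "finite A" using fC by (simp add: A_def)
    have jJ: "j \<notin> J" using j by (simp add: C_def)
    have jA: "j \<notin> A" by (simp add: A_def)
    have CA: "C = insert j A" using j by (auto simp: A_def)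
    have s1: "sgn_pair C J = sgn_pair A J * sg j J"
      unfolding CA by (rule sp_insert_left[OF fA fJ jA])
    have s2: "sgn_pair A (insert j J) = sgn_pair A J * sgg j A"
      by (rule sp_insert_right[OF fA fJ jJ])
    have s3: "sg j A * sgg j A = (-1) ^ card A" by (rule sg_sgg[OF fA jA])
    show "sgn_pair C J * v j * sg j (C - {j}) * \<beta> (C - {j}) =
      (-1) ^ k * (v j * sg j J * sgn_pair (C - {j}) (insert j J) * \<beta> (C - {j}))"
    proof (cases "\<beta> (C - {j}) = 0")
      case False
      then have ck: "card A = k" using h by (auto simp: hom_def A_def)
      have "sg j A = (-1) ^ k * sgg j A"
      proof -
        have "sg j A * sgg j A * sgg j A = (-1) ^ k * sgg j A" using s3 ck by simp
        moreover have "sgg j A * sgg j A = 1" using sgg_pm[of j A] by auto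
        ultimately show ?thesis by (simp add: mult.assoc)
      qed
      then show ?thesis unfolding A_def[symmetric] s1 s2 by (simp add: algebra_simps)
    qed simp
  qed
  also have "\<dots> = (-1) ^ k * (\<Sum>j\<in>C. v j * sg j J * hodge \<beta> (insert j J))"
  proof -
    have "\<And>j. j \<in> C \<Longrightarrow> hodge \<beta> (insert j J) = sgn_pair (C - {j}) (insert j J) * \<beta> (C - {j})"
    proof -
      fix j assume j: "j \<in> C"
      have "idx8 - insert j J = C - {j}" by (auto simp: C_def)
      moreover have "insert j J \<subseteq> idx8" using j True by (auto simp: C_def)
      ultimately show "hodge \<beta> (insert j J) = sgn_pair (C - {j}) (insert j J) * \<beta> (C - {j})"
        by (simp add: hodge_def)
    qed
    then show ?thesis by (simp add: sum_distrib_left algebra_simps)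
  qed
  also have "\<dots> = (-1) ^ k * interior v (hodge \<beta>) J"
    using True by (simp add: interior_sg C_def)
  finally show ?thesis .
qed

lemma card_idx8[simp]: "card idx8 = 8" by (simp add: idx8_def)

lemma hom_interior: assumes h: "hom (Suc k) \<alpha>" shows "hom k (interior v \<alpha>)"
  unfolding hom_def
proof (intro allI impI)
  fix I assume nz: "interior v \<alpha> I \<noteq> 0"
  then have I8: "I \<subseteq> idx8" by (auto simp: interior_sg split: if_splits)
  then have "(\<Sum>j\<in>idx8 - I. v j * sg j I * \<alpha> (insert j I)) \<noteq> 0" using nz by (simp add: interior_sg)
  then obtain j where j: "j \<in> idx8 - I" and "v j * sg j I * \<alpha> (insert j I) \<noteq> 0"
    by (meson sum.not_neutral_contains_not_neutral)
  then have a: "\<alpha> (insert j I) \<noteq> 0" by auto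
  have fI: "finite I" using I8 finite_subset idx8_finite by blast
  have "card (insert j I) = Suc k" using h a by (auto simp: hom_def)
  then show "card I = k \<and> I \<subseteq> idx8" using j fI I8 by simp
qed

lemma hom_wedge: assumes h: "hom k \<alpha>" shows "hom (Suc k) (wedge (flat a) \<alpha>)"
  unfolding hom_def
proof (intro allI impI)
  fix K assume nz: "wedge (flat a) \<alpha> K \<noteq> 0"
  then have K8: "K \<subseteq> idx8" by (auto simp: wedge_flat split: if_splits)
  then have "(\<Sum>i\<in>K. a i * sg i (K - {i}) * \<alpha> (K - {i})) \<noteq> 0" using nz by (simp add: wedge_flat)
  then obtain i where i: "i \<in> K" and "a i * sg i (K - {i}) * \<alpha> (K - {i}) \<noteq> 0"
    by (meson sum.not_neutral_contains_not_neutral)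
  then have a: "\<alpha> (K - {i}) \<noteq> 0" by auto
  have fK: "finite K" using K8 finite_subset idx8_finite by blast
  have "card (K - {i}) = k" using h a by (auto simp: hom_def)
  then show "card K = Suc k \<and> K \<subseteq> idx8" using i fK K8
    by (metis card_Suc_Diff1)
qed

lemma hom_hodge: assumes h: "hom k \<alpha>" shows "hom (8 - k) (hodge \<alpha>)"
  unfolding hom_def
proof (intro allI impI)
  fix J assume nz: "hodge \<alpha> J \<noteq> 0"
  then have J8: "J \<subseteq> idx8" and a: "\<alpha> (idx8 - J) \<noteq> 0" by (auto simp: hodge_def split: if_splits)
  have "card (idx8 - J) = k" using h a by (auto simp: hom_def)
  moreover have "card J \<le> 8" using J8 by (metis card_idx8 card_mono idx8_finite)
  ultimately show "card J = 8 - k \<and> J \<subseteq> idx8" using J8 by (simp add: card_Diff_subset finite_subset)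
qed

lemma hom_diff: "hom k \<alpha> \<Longrightarrow> hom k \<beta> \<Longrightarrow> hom k (\<alpha> - \<beta>)"
proof -
  assume "hom k \<alpha>" "hom k \<beta>"
  then show ?thesis unfolding hom_def by (metis diff_zero minus_apply zero_diff)
qed
lemma hom_add: "hom k \<alpha> \<Longrightarrow> hom k \<beta> \<Longrightarrow> hom k (\<alpha> + \<beta>)"
proof -
  assume "hom k \<alpha>" "hom k \<beta>"
  then show ?thesis unfolding hom_def by (metis add.right_neutral add_0 plus_fun_apply)
qed

definition Pr :: "form \<Rightarrow> form" where "Pr \<alpha> = (\<lambda>I. if I \<subseteq> idx8 then \<alpha> I else 0)"
definition Kc :: "real \<Rightarrow> form" where "Kc c = (\<lambda>_. c)"

lemma Kc_apply[simp]: "Kc c I = c" by (simp add: Kc_def)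

lemma Kc_simps: "Kc a * Kc b = Kc (a * b)" "Kc a + Kc b = Kc (a + b)" "Kc a - Kc b = Kc (a - b)"
   "- Kc a = Kc (- a)" "Kc 0 = 0" "Kc 1 = 1"
  by (rule ext; simp)+

lemma interior_lin1: "interior v (\<alpha> + \<beta>) = interior v \<alpha> + interior v \<beta>"
  by (rule ext) (simp add: interior_def sum.distrib distrib_left)
lemma interior_lin2: "interior v (\<alpha> - \<beta>) = interior v \<alpha> - interior v \<beta>"
  by (rule ext) (simp add: interior_def sum_subtractf right_diff_distrib)
lemma interior_lin3: "interior v (- \<alpha>) = - interior v \<alpha>"
  by (rule ext) (simp add: interior_def sum_negf)
lemma interior_lin4: "interior v (Kc c * \<alpha>) = Kc c * interior v \<alpha>"
  by (rule ext) (simp add: interior_def sum_distrib_left mult.left_commute)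
lemma interior_lin5: "interior v 0 = 0"
  by (rule ext) (simp add: interior_def)

lemma wedge_lin1: "wedge (flat a) (\<alpha> + \<beta>) = wedge (flat a) \<alpha> + wedge (flat a) \<beta>"
  by (rule ext) (simp add: wedge_flat sum.distrib distrib_left)
lemma wedge_lin2: "wedge (flat a) (\<alpha> - \<beta>) = wedge (flat a) \<alpha> - wedge (flat a) \<beta>"
  by (rule ext) (simp add: wedge_flat sum_subtractf right_diff_distrib)
lemma wedge_lin3: "wedge (flat a) (- \<alpha>) = - wedge (flat a) \<alpha>"
  by (rule ext) (simp add: wedge_flat sum_negf)
lemma wedge_lin4: "wedge (flat a) (Kc c * \<alpha>) = Kc c * wedge (flat a) \<alpha>"
  by (rule ext) (simp add: wedge_flat sum_distrib_left mult.left_commute)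
lemma wedge_lin5: "wedge (flat a) 0 = 0"
  by (rule ext) (simp add: wedge_flat)

lemma hodge_lin1: "hodge (\<alpha> + \<beta>) = hodge \<alpha> + hodge \<beta>"
  by (rule ext) (simp add: hodge_def distrib_left)
lemma hodge_lin2: "hodge (\<alpha> - \<beta>) = hodge \<alpha> - hodge \<beta>"
  by (rule ext) (simp add: hodge_def right_diff_distrib)
lemma hodge_lin3: "hodge (- \<alpha>) = - hodge \<alpha>"
  by (rule ext) (simp add: hodge_def)
lemma hodge_lin4: "hodge (Kc c * \<alpha>) = Kc c * hodge \<alpha>"
  by (rule ext) (simp add: hodge_def mult.left_commute)
lemma hodge_lin5: "hodge 0 = 0"
  by (rule ext) (simp add: hodge_def)

lemma Pr_lin1: "Pr (\<alpha> + \<beta>) = Pr \<alpha> + Pr \<beta>" by (rule ext) (simp add: Pr_def)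
lemma Pr_lin2: "Pr (\<alpha> - \<beta>) = Pr \<alpha> - Pr \<beta>" by (rule ext) (simp add: Pr_def)
lemma Pr_lin3: "Pr (- \<alpha>) = - Pr \<alpha>" by (rule ext) (simp add: Pr_def)
lemma Pr_lin4: "Pr (Kc c * \<alpha>) = Kc c * Pr \<alpha>" by (rule ext) (simp add: Pr_def)
lemma Pr_lin5: "Pr 0 = 0" by (rule ext) (simp add: Pr_def)
lemma Pr_Pr: "Pr (Pr \<alpha>) = Pr \<alpha>" by (rule ext) (simp add: Pr_def)
lemma Pr_int: "Pr (interior v \<alpha>) = interior v \<alpha>" by (rule ext) (simp add: Pr_def interior_def)
lemma Pr_wedge: "Pr (wedge (flat a) \<alpha>) = wedge (flat a) \<alpha>" by (rule ext) (simp add: Pr_def wedge_flat)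
lemma Pr_hodge: "Pr (hodge \<alpha>) = hodge \<alpha>" by (rule ext) (simp add: Pr_def hodge_def)
lemma int_Pr: "interior v (Pr \<alpha>) = interior v \<alpha>"
  by (rule ext) (auto simp: Pr_def interior_def intro!: sum.cong)
lemma wedge_Pr: "wedge (flat a) (Pr \<alpha>) = wedge (flat a) \<alpha>"
  by (rule ext) (auto simp: Pr_def wedge_flat intro!: sum.cong)

lemma interior_num: "interior v (numeral n * \<alpha>) = numeral n * interior v \<alpha>"
  by (rule ext) (simp add: interior_def sum_distrib_left mult.left_commute)
lemma wedge_num: "wedge (flat a) (numeral n * \<alpha>) = numeral n * wedge (flat a) \<alpha>"
  by (rule ext) (simp add: wedge_flat sum_distrib_left mult.left_commute)
lemma hodge_num: "hodge (numeral n * \<alpha>) = numeral n * hodge \<alpha>"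
  by (rule ext) (simp add: hodge_def mult.left_commute)
lemma Pr_num: "Pr (numeral n * \<alpha>) = numeral n * Pr \<alpha>"
  by (rule ext) (simp add: Pr_def)

lemmas lin_simps = interior_num wedge_num hodge_num Pr_num interior_lin1 interior_lin2 interior_lin3 interior_lin4 interior_lin5
  wedge_lin1 wedge_lin2 wedge_lin3 wedge_lin4 wedge_lin5
  hodge_lin1 hodge_lin2 hodge_lin3 hodge_lin4 hodge_lin5
  Pr_lin1 Pr_lin2 Pr_lin3 Pr_lin4 Pr_lin5 Pr_Pr Pr_int Pr_wedge Pr_hodge int_Pr wedge_Pr

lemma CAR: "interior v (wedge (flat a) \<alpha>) = Kc (dotp v a) * Pr \<alpha> - wedge (flat a) (interior v \<alpha>)"
proof (rule ext)
  fix I show "interior v (wedge (flat a) \<alpha>) I = (Kc (dotp v a) * Pr \<alpha> - wedge (flat a) (interior v \<alpha>)) I"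
    using CAR_pt[of v a \<alpha> I] by (simp add: Pr_def eq_diff_eq)
qed

lemma int_anti: "interior v (interior w \<alpha>) = - interior w (interior v \<alpha>)"
  by (rule ext) (simp only: fun_Compl_def, rule int_anti_pt)
lemma int_self: "interior v (interior v \<alpha>) = 0"
proof (rule ext)
  fix I have "interior v (interior v \<alpha>) I = - interior v (interior v \<alpha>) I" by (rule int_anti_pt)
  then show "interior v (interior v \<alpha>) I = 0 I" by simp
qed
lemma wedge_anti: "wedge (flat a) (wedge (flat b) \<alpha>) = - wedge (flat b) (wedge (flat a) \<alpha>)"
  by (rule ext) (simp only: fun_Compl_def, rule wedge_anti_pt)
lemma wedge_self: "wedge (flat a) (wedge (flat a) \<alpha>) = 0"
proof (rule ext)
  fix I have "wedge (flat a) (wedge (flat a) \<alpha>) I = - wedge (flat a) (wedge (flat a) \<alpha>) I" by (rule wedge_anti_pt)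
  then show "wedge (flat a) (wedge (flat a) \<alpha>) I = 0 I" by simp
qed

lemma dotp_comm: "dotp v w = dotp w v" by (simp add: dotp_def mult.commute)

lemma opB_alt: "opB v w \<alpha> = wedge (flat v) (interior w \<alpha>) - wedge (flat w) (interior v \<alpha>)"
proof -
  have "opB v w \<alpha> = interior v (wedge (flat w) \<alpha>) - interior w (wedge (flat v) \<alpha>)"
    by (simp add: opB_def form_diff_def fun_diff_def)
  also have "\<dots> = wedge (flat v) (interior w \<alpha>) - wedge (flat w) (interior v \<alpha>)"
    unfolding CAR dotp_comm[of v w] by simp
  finally show ?thesis .
qed

lemma B3: "opB v w (opB v w (opB v w \<alpha>)) = - (Kc (dotp v v) * Kc (dotp w w) - Kc (dotp v w) * Kc (dotp v w)) * opB v w \<alpha>"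
proof -
  note r = wedge_anti[of w v] int_anti[of v w] wedge_self int_self CAR lin_simps dotp_comm[of w v]
  show ?thesis unfolding opB_alt
    apply (simp add: r)
    apply (simp add: algebra_simps)
    done
qed


lemma form_ops: "form_diff \<alpha> \<beta> = \<alpha> - \<beta>" "form_add \<alpha> \<beta> = \<alpha> + \<beta>" "form_scale c \<alpha> = Kc c * \<alpha>"
  by (rule ext; simp add: form_diff_def form_add_def form_scale_def)+

lemma hodge_int4: "hom 4 \<alpha> \<Longrightarrow> hodge (interior v \<alpha>) = - wedge (flat v) (hodge \<alpha>)"
  by (rule ext) (simp add: hodge_interior[of 4])
lemma hodge_wedge3: "hom 3 \<beta> \<Longrightarrow> hodge (wedge (flat v) \<beta>) = - interior v (hodge \<beta>)"
  by (rule ext) (simp add: hodge_wedge[of 3])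

lemma hom_B: "hom (Suc k) \<alpha> \<Longrightarrow> hom (Suc k) (opB v w \<alpha>)"
  unfolding opB_alt by (intro hom_diff hom_wedge hom_interior)

lemma L_eq: assumes h: "hom 4 \<alpha>" shows "flow_rhs v w \<alpha> = opB v w (hodge \<alpha>)"
proof -
  note r = wedge_anti[of w v] int_anti[of v w] wedge_self int_self CAR lin_simps dotp_comm[of w v]
  show ?thesis unfolding flow_rhs_def form_ops opB_alt hodge_int4[OF h]
    by (simp add: r)
qed

lemma hodge_B: assumes h: "hom 4 \<alpha>" shows "hodge (opB v w \<alpha>) = opB v w (hodge \<alpha>)"
proof -
  note r = wedge_anti[of w v] int_anti[of v w] wedge_self int_self CAR lin_simps dotp_comm[of w v]
  have h3: "hom 3 (interior u \<alpha>)" for u using hom_interior[of 3 \<alpha> u] h by simp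
  show ?thesis unfolding opB_alt hodge_lin2 hodge_wedge3[OF h3] hodge_int4[OF h]
    by (simp add: r)
qed

lemma idx8_lit: "idx8 = {0,1,2,3,4,5,6,7}" by (auto simp: idx8_def)

fun sgl :: "nat list \<Rightarrow> real" where
  "sgl [] = 1"
| "sgl (i # l) = (-1) ^ length (filter (\<lambda>x. x < i) l) * sgl l"

lemma sg_list: "distinct l \<Longrightarrow> sg i (set l) = (-1) ^ length (filter (\<lambda>x. x < i) l)"
proof -
  assume d: "distinct l"
  have "card {x \<in> set l. x < i} = length (filter (\<lambda>x. x < i) l)"
    using d by (metis distinct_card distinct_filter set_filter)
  then show ?thesis by (simp add: sg_def)
qed

lemma dx1_flat: "i < 8 \<Longrightarrow> dx1 i = flat (\<lambda>j. if j = i then 1 else 0)"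
proof (rule ext)
  fix J assume i: "i < 8"
  have "flat (\<lambda>j. if j = i then 1 else 0) J = (\<Sum>j\<in>idx8. if j = i then dx1 i J else 0)"
    unfolding flat_def by (rule sum.cong) auto
  also have "\<dots> = dx1 i J" using i by (simp add: idx8_def)
  finally show "dx1 i J = flat (\<lambda>j. if j = i then 1 else 0) J" by simp
qed

lemma wedge_dx1: "i < 8 \<Longrightarrow> wedge (dx1 i) \<beta> K = (if K \<subseteq> idx8 \<and> i \<in> K then sg i (K - {i}) * \<beta> (K - {i}) else 0)"
proof -
  assume i: "i < 8"
  show ?thesis
  proof (cases "K \<subseteq> idx8")
    case True
    have fK: "finite K" using True finite_subset idx8_finite by blast
    have "wedge (dx1 i) \<beta> K = (\<Sum>j\<in>K. (if j = i then 1 else 0) * sg j (K - {j}) * \<beta> (K - {j}))"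
      using True by (simp add: dx1_flat[OF i] wedge_flat)
    also have "\<dots> = (\<Sum>j\<in>K. if j = i then sg i (K - {i}) * \<beta> (K - {i}) else 0)"
      by (rule sum.cong) auto
    also have "\<dots> = (if i \<in> K then sg i (K - {i}) * \<beta> (K - {i}) else 0)"
      using fK by (simp add: sum.delta')
    finally show ?thesis using True by simp
  qed (simp add: dx1_flat[OF i] wedge_flat)
qed

lemma dxl_set: "distinct l \<Longrightarrow> set l \<subseteq> idx8 \<Longrightarrow> dxl l K = (if K = set l then sgl l else 0)"
proof (induction l arbitrary: K)
  case Nil
  then show ?case by (simp add: dxl_def form_one_def)
next
  case (Cons i l)
  have i8: "i < 8" using Cons.prems by (auto simp: idx8_def)
  have il: "i \<notin> set l" and dl: "distinct l" and sl: "set l \<subseteq> idx8" using Cons.prems by auto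
  have "dxl (i # l) K = wedge (dx1 i) (dxl l) K" by (simp add: dxl_def)
  also have "\<dots> = (if K \<subseteq> idx8 \<and> i \<in> K then sg i (K - {i}) * (if K - {i} = set l then sgl l else 0) else 0)"
    by (simp add: wedge_dx1[OF i8] Cons.IH[OF dl sl])
  also have "\<dots> = (if K = set (i # l) then sgl (i # l) else 0)"
  proof (cases "K = insert i (set l)")
    case True
    then have "K - {i} = set l" using il by auto
    then show ?thesis using True Cons.prems dl by (simp add: sg_list)
  next
    case False
    then have "\<not> (i \<in> K \<and> K - {i} = set l)" by auto
    then show ?thesis using False by auto
  qed
  finally show ?case .
qed

lemma sp_sum: "finite A \<Longrightarrow> finite C \<Longrightarrow>
   sgn_pair A C = (-1) ^ (\<Sum>a\<in>A. \<Sum>c\<in>C. if c < a then 1 else 0)"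
proof -
  assume fA: "finite A" and fC: "finite C"
  have e: "{(i, j). i \<in> A \<and> j \<in> C \<and> j < i} = Sigma A (\<lambda>i. {j \<in> C. j < i})" by auto
  have "card (Sigma A (\<lambda>i. {j \<in> C. j < i})) = (\<Sum>a\<in>A. card {j \<in> C. j < a})"
    using fA fC by (simp add: card_SigmaI)
  also have "\<dots> = (\<Sum>a\<in>A. \<Sum>c\<in>C. if c < a then 1 else 0)"
  proof (rule sum.cong[OF refl])
    fix a show "card {j \<in> C. j < a} = (\<Sum>c\<in>C. if c < a then 1 else 0)"
      unfolding card_eq_sum using fC by (rule sum.inter_filter)
  qed
  finally show ?thesis unfolding sgn_pair_def e by simp
qed

lemma seteq8: "A \<subseteq> idx8 \<Longrightarrow> B \<subseteq> idx8 \<Longrightarrow> (A = B) = (\<forall>x\<in>idx8. x \<in> A \<longleftrightarrow> x \<in> B)"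
  by blast

lemma dxl_0: "dxl [0,1,2,3] K = (if K = {0,1,2,3} then 1 else 0)"
  using dxl_set[of "[0,1,2,3]" K] by (simp add: idx8_lit)
lemma dxl_1: "dxl [0,1,6,7] K = (if K = {0,1,6,7} then 1 else 0)"
  using dxl_set[of "[0,1,6,7]" K] by (simp add: idx8_lit)
lemma dxl_2: "dxl [0,5,2,7] K = (if K = {0,5,2,7} then - 1 else 0)"
  using dxl_set[of "[0,5,2,7]" K] by (simp add: idx8_lit)
lemma dxl_3: "dxl [0,5,6,3] K = (if K = {0,5,6,3} then 1 else 0)"
  using dxl_set[of "[0,5,6,3]" K] by (simp add: idx8_lit)
lemma dxl_4: "dxl [0,4,1,5] K = (if K = {0,4,1,5} then - 1 else 0)"
  using dxl_set[of "[0,4,1,5]" K] by (simp add: idx8_lit)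
lemma dxl_5: "dxl [0,4,2,6] K = (if K = {0,4,2,6} then - 1 else 0)"
  using dxl_set[of "[0,4,2,6]" K] by (simp add: idx8_lit)
lemma dxl_6: "dxl [0,4,3,7] K = (if K = {0,4,3,7} then - 1 else 0)"
  using dxl_set[of "[0,4,3,7]" K] by (simp add: idx8_lit)
lemma dxl_7: "dxl [4,5,6,7] K = (if K = {4,5,6,7} then 1 else 0)"
  using dxl_set[of "[4,5,6,7]" K] by (simp add: idx8_lit)
lemma dxl_8: "dxl [4,5,2,3] K = (if K = {4,5,2,3} then 1 else 0)"
  using dxl_set[of "[4,5,2,3]" K] by (simp add: idx8_lit)
lemma dxl_9: "dxl [4,1,6,3] K = (if K = {4,1,6,3} then - 1 else 0)"
  using dxl_set[of "[4,1,6,3]" K] by (simp add: idx8_lit)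
lemma dxl_10: "dxl [4,1,2,7] K = (if K = {4,1,2,7} then 1 else 0)"
  using dxl_set[of "[4,1,2,7]" K] by (simp add: idx8_lit)
lemma dxl_11: "dxl [2,6,3,7] K = (if K = {2,6,3,7} then - 1 else 0)"
  using dxl_set[of "[2,6,3,7]" K] by (simp add: idx8_lit)
lemma dxl_12: "dxl [1,5,3,7] K = (if K = {1,5,3,7} then - 1 else 0)"
  using dxl_set[of "[1,5,3,7]" K] by (simp add: idx8_lit)
lemma dxl_13: "dxl [1,5,2,6] K = (if K = {1,5,2,6} then - 1 else 0)"
  using dxl_set[of "[1,5,2,6]" K] by (simp add: idx8_lit)
definition SS :: "nat set set" where
  "SS = {{0,1,2,3},{0,1,6,7},{0,5,2,7},{0,5,6,3},{0,4,1,5},{0,4,2,6},{0,4,3,7},{4,5,6,7},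
         {4,5,2,3},{4,1,6,3},{4,1,2,7},{2,6,3,7},{1,5,3,7},{1,5,2,6}}"

lemma spin7_expand: "spin7_form K =
   (if K = {0,1,2,3} then 1 else 0) - (if K = {0,1,6,7} then 1 else 0)
 - (if K = {0,5,2,7} then - 1 else 0) - (if K = {0,5,6,3} then 1 else 0)
 + (if K = {0,4,1,5} then - 1 else 0) + (if K = {0,4,2,6} then - 1 else 0)
 + (if K = {0,4,3,7} then - 1 else 0) + (if K = {4,5,6,7} then 1 else 0)
 - (if K = {4,5,2,3} then 1 else 0) - (if K = {4,1,6,3} then - 1 else 0)
 - (if K = {4,1,2,7} then 1 else 0) + (if K = {2,6,3,7} then - 1 else 0)
 + (if K = {1,5,3,7} then - 1 else 0) + (if K = {1,5,2,6} then - 1 else 0)"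
  unfolding spin7_form_def dxl_0 dxl_1 dxl_2 dxl_3 dxl_4 dxl_5 dxl_6 dxl_7 dxl_8 dxl_9 dxl_10 dxl_11 dxl_12 dxl_13
  by (rule refl)

lemma spin7_out: "K \<notin> SS \<Longrightarrow> spin7_form K = 0"
  unfolding spin7_expand SS_def by (simp split del: if_split)

lemma SS_props: "K \<in> SS \<Longrightarrow> card K = 4 \<and> K \<subseteq> idx8"
  unfolding SS_def idx8_lit by (elim insertE emptyE) simp_all

lemma hom_spin7: "hom 4 spin7_form"
  unfolding hom_def using spin7_out SS_props by blast

lemma hodge_SS: "J \<in> SS \<Longrightarrow> hodge spin7_form J = spin7_form J"
  unfolding SS_def
  by (elim insertE emptyE; simp only:; simp add: hodge_def spin7_expand idx8_lit seteq8 sp_sum insert_Diff_if split del: if_split)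

lemma SS_compl: "S \<in> SS \<Longrightarrow> idx8 - S \<in> SS"
  unfolding SS_def
  by (elim insertE emptyE; simp only:; simp add: idx8_lit seteq8 insert_Diff_if)

lemma hodge_spin7: "hodge spin7_form = spin7_form"
proof (rule ext)
  fix J
  show "hodge spin7_form J = spin7_form J"
  proof (cases "J \<in> SS")
    case True then show ?thesis by (rule hodge_SS)
  next
    case False
    have "hodge spin7_form J = 0"
    proof (cases "J \<subseteq> idx8")
      case True
      have "idx8 - J \<notin> SS"
      proof
        assume "idx8 - J \<in> SS"
        then have "idx8 - (idx8 - J) \<in> SS" by (rule SS_compl)
        moreover have "idx8 - (idx8 - J) = J" using True by auto
        ultimately show False using False by simp
      qed
      then show ?thesis by (simp add: hodge_def spin7_out)
    qed (simp add: hodge_def)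
    then show ?thesis using spin7_out[OF False] by simp
  qed
qed

definition ip :: "form \<Rightarrow> form \<Rightarrow> real" where
  "ip \<alpha> \<beta> = (\<Sum>I\<in>Pow idx8. \<alpha> I * \<beta> I)"

lemma ip_adj: "ip (wedge (flat v) \<alpha>) \<beta> = ip \<alpha> (interior v \<beta>)"
proof -
  have "ip (wedge (flat v) \<alpha>) \<beta> = (\<Sum>K\<in>Pow idx8. \<Sum>i\<in>K. v i * sg i (K - {i}) * \<alpha> (K - {i}) * \<beta> K)"
    unfolding ip_def by (rule sum.cong[OF refl]) (auto simp: wedge_flat sum_distrib_right)
  also have "\<dots> = (\<Sum>(K, i)\<in>Sigma (Pow idx8) (\<lambda>K. K). v i * sg i (K - {i}) * \<alpha> (K - {i}) * \<beta> K)"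
    by (rule sum.Sigma) (auto intro: finite_subset)
  also have "\<dots> = (\<Sum>(J, j)\<in>Sigma (Pow idx8) (\<lambda>J. idx8 - J). v j * sg j J * \<alpha> J * \<beta> (insert j J))"
    by (rule sum.reindex_bij_witness[where i = "\<lambda>(J, j). (insert j J, j)" and j = "\<lambda>(K, i). (K - {i}, i)"])
       (auto simp: insert_absorb)
  also have "\<dots> = (\<Sum>J\<in>Pow idx8. \<Sum>j\<in>idx8 - J. v j * sg j J * \<alpha> J * \<beta> (insert j J))"
    by (rule sum.Sigma[symmetric]) auto
  also have "\<dots> = ip \<alpha> (interior v \<beta>)"
    unfolding ip_def by (rule sum.cong[OF refl]) (auto simp: interior_sg sum_distrib_left algebra_simps)
  finally show ?thesis .
qed

lemma ip_sym: "ip \<alpha> \<beta> = ip \<beta> \<alpha>" by (simp add: ip_def mult.commute)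

lemma ip_lin: "ip \<alpha> (\<beta> - \<gamma>) = ip \<alpha> \<beta> - ip \<alpha> \<gamma>" "ip \<alpha> (Kc c * \<beta>) = c * ip \<alpha> \<beta>"
   "ip \<alpha> (Pr \<beta>) = ip \<alpha> \<beta>"
  by (auto simp: ip_def sum_subtractf right_diff_distrib sum_distrib_left Pr_def algebra_simps intro!: sum.cong)

lemma ip_wedge_sq: "ip (wedge (flat v) \<beta>) (wedge (flat v) \<beta>) = dotp v v * ip \<beta> \<beta> - ip (interior v \<beta>) (interior v \<beta>)"
proof -
  have "ip (wedge (flat v) \<beta>) (wedge (flat v) \<beta>) = ip \<beta> (interior v (wedge (flat v) \<beta>))" by (rule ip_adj)
  also have "\<dots> = dotp v v * ip \<beta> \<beta> - ip \<beta> (wedge (flat v) (interior v \<beta>))"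
    by (simp add: CAR ip_lin)
  also have "ip \<beta> (wedge (flat v) (interior v \<beta>)) = ip (interior v \<beta>) (interior v \<beta>)"
    by (subst ip_sym) (rule ip_adj)
  finally show ?thesis .
qed

lemma sum_Pow_singletons:
  assumes "\<And>K. K \<in> Pow idx8 \<Longrightarrow> (\<And>i. K \<noteq> {i}) \<Longrightarrow> f K = 0"
  shows "(\<Sum>K\<in>Pow idx8. f K) = (\<Sum>i\<in>idx8. f {i})"
proof -
  have "(\<Sum>K\<in>Pow idx8. f K) = (\<Sum>K\<in>(\<lambda>i. {i}) ` idx8. f K)"
    by (rule sum.mono_neutral_right) (use assms in auto)
  also have "\<dots> = (\<Sum>i\<in>idx8. f {i})" by (subst sum.reindex) (auto simp: inj_on_def)
  finally show ?thesis .
qed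

lemma ip_flat: "ip (flat w) (flat w) = dotp w w"
proof -
  have "ip (flat w) (flat w) = (\<Sum>i\<in>idx8. flat w {i} * flat w {i})"
    unfolding ip_def by (rule sum_Pow_singletons) (auto simp: flat_nonsingle)
  also have "\<dots> = dotp w w" unfolding dotp_def
    by (rule sum.cong[OF refl]) (auto simp: flat_single idx8_def)
  finally show ?thesis .
qed

lemma interior_flat: "interior v (flat w) I = (if I = {} then dotp v w else 0)"
proof (cases "I = {}")
  case True
  have "interior v (flat w) {} = (\<Sum>j\<in>idx8. v j * sg j {} * flat w {j})"
    by (simp add: interior_sg)
  also have "\<dots> = dotp v w" unfolding dotp_def
    by (rule sum.cong[OF refl]) (auto simp: flat_single idx8_def sg_def)
  finally show ?thesis using True by simp
next
  case False
  have "\<And>j. j \<notin> I \<Longrightarrow> flat w (insert j I) = 0"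
    using False by (intro flat_nonsingle) auto
  then show ?thesis using False by (auto simp: interior_sg intro!: sum.neutral)
qed

lemma biv_norm_sq: "(biv_norm v w)\<^sup>2 = dotp v v * dotp w w - (dotp v w)\<^sup>2"
proof -
  have "(biv_norm v w)\<^sup>2 = ip (wedge (flat v) (flat w)) (wedge (flat v) (flat w))"
    unfolding biv_norm_def form_norm_def ip_def
    by (simp add: power2_eq_square sum_nonneg)
  also have "\<dots> = dotp v v * dotp w w - ip (interior v (flat w)) (interior v (flat w))"
    by (simp add: ip_wedge_sq ip_flat)
  also have "ip (interior v (flat w)) (interior v (flat w)) = (dotp v w)\<^sup>2"
  proof -
    have "ip (interior v (flat w)) (interior v (flat w)) = (\<Sum>I\<in>Pow idx8. if I = {} then (dotp v w)\<^sup>2 else 0)"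
      unfolding ip_def by (rule sum.cong[OF refl]) (simp add: interior_flat power2_eq_square)
    also have "\<dots> = (dotp v w)\<^sup>2" by (simp add: sum.delta)
    finally show ?thesis .
  qed
  finally show ?thesis .
qed

definition Nf :: "form \<Rightarrow> real" where "Nf \<alpha> = (\<Sum>J\<in>Pow idx8. \<bar>\<alpha> J\<bar>)"

lemma Nf_nonneg: "0 \<le> Nf \<alpha>" by (simp add: Nf_def sum_nonneg)

lemma le_Nf: "J \<subseteq> idx8 \<Longrightarrow> \<bar>\<alpha> J\<bar> \<le> Nf \<alpha>"
  unfolding Nf_def by (rule member_le_sum) auto

lemma Nf_bound: "(\<And>I. \<bar>\<beta> I\<bar> \<le> C) \<Longrightarrow> Nf \<beta> \<le> 256 * C"
proof -
  assume h: "\<And>I. \<bar>\<beta> I\<bar> \<le> C"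
  have "Nf \<beta> \<le> of_nat (card (Pow idx8)) * C" unfolding Nf_def by (rule sum_bounded_above) (use h in auto)
  also have "card (Pow idx8) = 256" by (simp add: card_Pow)
  finally show ?thesis by simp
qed

lemma interior_bound: "\<bar>interior v \<alpha> I\<bar> \<le> (\<Sum>j\<in>idx8. \<bar>v j\<bar>) * Nf \<alpha>"
proof (cases "I \<subseteq> idx8")
  case True
  have "\<bar>interior v \<alpha> I\<bar> = \<bar>\<Sum>j\<in>idx8 - I. v j * sg j I * \<alpha> (insert j I)\<bar>"
    using True by (simp add: interior_sg)
  also have "\<dots> \<le> (\<Sum>j\<in>idx8 - I. \<bar>v j * sg j I * \<alpha> (insert j I)\<bar>)" by (rule sum_abs)
  also have "\<dots> \<le> (\<Sum>j\<in>idx8 - I. \<bar>v j\<bar> * Nf \<alpha>)"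
  proof (rule sum_mono)
    fix j assume j: "j \<in> idx8 - I"
    have s: "\<bar>sg j I\<bar> = 1" using sg_pm[of j I] by auto
    have "\<bar>\<alpha> (insert j I)\<bar> \<le> Nf \<alpha>" using j True by (intro le_Nf) auto
    then show "\<bar>v j * sg j I * \<alpha> (insert j I)\<bar> \<le> \<bar>v j\<bar> * Nf \<alpha>"
      by (simp add: abs_mult s mult_left_mono)
  qed
  also have "\<dots> \<le> (\<Sum>j\<in>idx8. \<bar>v j\<bar> * Nf \<alpha>)"
    by (rule sum_mono2) (auto simp: Nf_nonneg)
  finally show ?thesis by (simp add: sum_distrib_right)
next
  case False then show ?thesis by (simp add: interior_sg Nf_nonneg sum_nonneg)
qed

lemma hodge_bound: "\<bar>hodge \<alpha> J\<bar> \<le> Nf \<alpha>"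
proof (cases "J \<subseteq> idx8")
  case True
  have "\<bar>sgn_pair (idx8 - J) J\<bar> = 1" unfolding sgn_pair_def by simp
  moreover have "\<bar>\<alpha> (idx8 - J)\<bar> \<le> Nf \<alpha>" by (rule le_Nf) auto
  ultimately show ?thesis using True by (simp add: hodge_def abs_mult)
qed (simp add: hodge_def Nf_nonneg)

lemma flow_bound: "\<bar>flow_rhs v w \<alpha> I\<bar> \<le> (2 * 65536 * (\<Sum>j\<in>idx8. \<bar>v j\<bar>) * (\<Sum>j\<in>idx8. \<bar>w j\<bar>)) * Nf \<alpha>"
proof -
  define V where "V = (\<Sum>j\<in>idx8. \<bar>v j\<bar>)"
  define W where "W = (\<Sum>j\<in>idx8. \<bar>w j\<bar>)"
  have V0: "0 \<le> V" and W0: "0 \<le> W" by (auto simp: V_def W_def sum_nonneg)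
  have NPv: "Nf (interior v \<alpha>) \<le> 256 * (V * Nf \<alpha>)" by (rule Nf_bound) (simp add: interior_bound V_def)
  have NQ: "Nf (interior w \<alpha>) \<le> 256 * (W * Nf \<alpha>)" by (rule Nf_bound) (simp add: interior_bound W_def)
  have NhPv: "Nf (hodge (interior v \<alpha>)) \<le> 256 * Nf (interior v \<alpha>)" by (rule Nf_bound) (rule hodge_bound)
  have NhQ: "Nf (hodge (interior w \<alpha>)) \<le> 256 * Nf (interior w \<alpha>)" by (rule Nf_bound) (rule hodge_bound)
  have t1: "\<bar>interior w (hodge (interior v \<alpha>)) I\<bar> \<le> W * Nf (hodge (interior v \<alpha>))"
    using interior_bound[of w _ I] by (simp add: W_def)
  have t2: "\<bar>interior v (hodge (interior w \<alpha>)) I\<bar> \<le> V * Nf (hodge (interior w \<alpha>))"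
    using interior_bound[of v _ I] by (simp add: V_def)
  have "W * Nf (hodge (interior v \<alpha>)) \<le> W * (256 * (256 * (V * Nf \<alpha>)))"
    using NhPv NPv W0 by (intro mult_left_mono) auto
  moreover have "V * Nf (hodge (interior w \<alpha>)) \<le> V * (256 * (256 * (W * Nf \<alpha>)))"
    using NhQ NQ V0 by (intro mult_left_mono) auto
  moreover have "\<bar>flow_rhs v w \<alpha> I\<bar> \<le> \<bar>interior w (hodge (interior v \<alpha>)) I\<bar> + \<bar>interior v (hodge (interior w \<alpha>)) I\<bar>"
    by (simp add: flow_rhs_def form_diff_def abs_triangle_ineq4)
  ultimately show ?thesis using t1 t2 unfolding V_def[symmetric] W_def[symmetric]
    by (simp add: algebra_simps)
qed

lemma sum_abs_sq: "(\<Sum>J\<in>A. \<bar>f J\<bar>)\<^sup>2 \<le> real (card A) * (\<Sum>J\<in>A. (f J)\<^sup>2)" for f :: "'a \<Rightarrow> real"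
proof (cases "finite A")
  case True
  have "(\<Sum>J\<in>A. \<bar>f J\<bar>)\<^sup>2 = (\<Sum>I\<in>A. \<Sum>J\<in>A. \<bar>f I\<bar> * \<bar>f J\<bar>)"
    by (simp add: power2_eq_square sum_product)
  also have "\<dots> \<le> (\<Sum>I\<in>A. \<Sum>J\<in>A. ((f I)\<^sup>2 + (f J)\<^sup>2) / 2)"
  proof (intro sum_mono)
    fix I J
    have "0 \<le> (\<bar>f I\<bar> - \<bar>f J\<bar>)\<^sup>2" by simp
    then show "\<bar>f I\<bar> * \<bar>f J\<bar> \<le> ((f I)\<^sup>2 + (f J)\<^sup>2) / 2"
      by (simp add: power2_eq_square algebra_simps)
  qed
  also have "\<dots> = real (card A) * (\<Sum>J\<in>A. (f J)\<^sup>2)"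
    by (simp add: sum.distrib sum_divide_distrib[symmetric] sum_distrib_left[symmetric] add_divide_distrib)
  finally show ?thesis .
qed simp

lemma energy_zero:
  fixes E E' :: "real \<Rightarrow> real" and K :: real
  assumes d: "\<And>t. (E has_real_derivative E' t) (at t)"
    and b: "\<And>t. \<bar>E' t\<bar> \<le> K * E t" and E0: "E 0 = 0" and nn: "\<And>t. 0 \<le> E t"
  shows "E t = 0"
proof (cases "0 \<le> t")
  case True
  define g where "g s = E s * exp (- K * s)" for s
  have "g t \<le> g 0"
  proof (rule DERIV_nonpos_imp_nonincreasing[OF True])
    fix x
    have "(g has_real_derivative (E' x * exp (- K * x) + E x * (exp (- K * x) * (- K)))) (at x)"
      unfolding g_def by (auto intro!: derivative_eq_intros d)
    moreover have "E' x * exp (- K * x) + E x * (exp (- K * x) * (- K)) \<le> 0"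
    proof -
      have "E' x \<le> K * E x" using b[of x] by simp
      then have "(E' x - K * E x) * exp (- K * x) \<le> 0" by (simp add: mult_nonpos_nonneg)
      then show ?thesis by (simp add: algebra_simps)
    qed
    ultimately show "\<exists>y. (g has_real_derivative y) (at x) \<and> y \<le> 0" by blast
  qed
  then have "E t * exp (- K * t) \<le> 0" by (simp add: g_def E0)
  then have "E t \<le> 0" by (simp add: mult_le_0_iff)
  then show ?thesis using nn[of t] by simp
next
  case False
  then have t0: "t \<le> 0" by simp
  define g where "g s = E s * exp (K * s)" for s
  have "g t \<le> g 0"
  proof (rule DERIV_nonneg_imp_nondecreasing[OF t0])
    fix x
    have "(g has_real_derivative (E' x * exp (K * x) + E x * (exp (K * x) * K))) (at x)"
      unfolding g_def by (auto intro!: derivative_eq_intros d)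
    moreover have "E' x * exp (K * x) + E x * (exp (K * x) * K) \<ge> 0"
    proof -
      have "- E' x \<le> K * E x" using b[of x] by simp
      then have "(E' x + K * E x) * exp (K * x) \<ge> 0" by simp
      then show ?thesis by (simp add: algebra_simps)
    qed
    ultimately show "\<exists>y. (g has_real_derivative y) (at x) \<and> y \<ge> 0" by blast
  qed
  then have "E t * exp (K * t) \<le> 0" by (simp add: g_def E0)
  then have "E t \<le> 0" by (simp add: mult_le_0_iff)
  then show ?thesis using nn[of t] by simp
qed

lemma flow_lin: "flow_rhs v w (\<alpha> - \<beta>) = flow_rhs v w \<alpha> - flow_rhs v w \<beta>"
   "flow_rhs v w (\<alpha> + \<beta>) = flow_rhs v w \<alpha> + flow_rhs v w \<beta>"
   "flow_rhs v w (Kc c * \<alpha>) = Kc c * flow_rhs v w \<alpha>"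
  by (simp_all add: flow_rhs_def form_ops lin_simps right_diff_distrib)

lemma flow_out: "\<not> I \<subseteq> idx8 \<Longrightarrow> flow_rhs v w \<alpha> I = 0"
  by (simp add: flow_rhs_def form_diff_def interior_sg)

lemma ode_unique:
  fixes D :: "real \<Rightarrow> form"
  assumes d: "\<forall>t I. ((\<lambda>s. D s I) has_real_derivative flow_rhs v w (D t) I) (at t)"
    and D0: "D 0 = 0"
  shows "D t = 0"
proof (rule ext)
  fix I
  show "D t I = 0 I"
  proof (cases "I \<subseteq> idx8")
    case False
    have "\<forall>x. ((\<lambda>s. D s I) has_real_derivative 0) (at x)"
      using d flow_out[OF False] by metis
    then have "D t I = D 0 I" by (rule DERIV_isconst_all)
    then show ?thesis using D0 by simp
  next
    case True
    define M where "M = 2 * 65536 * (\<Sum>j\<in>idx8. \<bar>v j\<bar>) * (\<Sum>j\<in>idx8. \<bar>w j\<bar>)"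
    have M0: "0 \<le> M" by (simp add: M_def sum_nonneg)
    define E where "E s = (\<Sum>J\<in>Pow idx8. (D s J)\<^sup>2)" for s
    define E' where "E' s = (\<Sum>J\<in>Pow idx8. 2 * D s J * flow_rhs v w (D s) J)" for s
    have dE: "(E has_real_derivative E' s) (at s)" for s
    proof -
      have "((\<lambda>x. \<Sum>J\<in>Pow idx8. (D x J)\<^sup>2) has_real_derivative (\<Sum>J\<in>Pow idx8. 2 * D s J * flow_rhs v w (D s) J)) (at s)"
      proof (rule DERIV_sum)
        fix J
        have "((\<lambda>x. D x J) has_real_derivative flow_rhs v w (D s) J) (at s)" using d by blast
        then show "((\<lambda>x. (D x J)\<^sup>2) has_real_derivative 2 * D s J * flow_rhs v w (D s) J) (at s)"
          by (auto intro!: derivative_eq_intros)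
      qed
      then show ?thesis unfolding E_def[abs_def] E'_def .
    qed
    have bE: "\<bar>E' s\<bar> \<le> (2 * M * 256) * E s" for s
    proof -
      have "\<bar>E' s\<bar> \<le> (\<Sum>J\<in>Pow idx8. \<bar>2 * D s J * flow_rhs v w (D s) J\<bar>)"
        unfolding E'_def by (rule sum_abs)
      also have "\<dots> \<le> (\<Sum>J\<in>Pow idx8. 2 * M * (\<bar>D s J\<bar> * Nf (D s)))"
      proof (rule sum_mono)
        fix J
        have "\<bar>flow_rhs v w (D s) J\<bar> \<le> M * Nf (D s)" using flow_bound by (simp add: M_def)
        then have "\<bar>D s J\<bar> * \<bar>flow_rhs v w (D s) J\<bar> \<le> \<bar>D s J\<bar> * (M * Nf (D s))"
          by (intro mult_left_mono) auto
        then show "\<bar>2 * D s J * flow_rhs v w (D s) J\<bar> \<le> 2 * M * (\<bar>D s J\<bar> * Nf (D s))"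
          by (simp add: abs_mult algebra_simps)
      qed
      also have "\<dots> = 2 * M * (Nf (D s))\<^sup>2"
        by (simp add: sum_distrib_left[symmetric] sum_distrib_right[symmetric] Nf_def power2_eq_square)
      also have "\<dots> \<le> 2 * M * (256 * E s)"
      proof -
        have "(Nf (D s))\<^sup>2 \<le> real (card (Pow idx8)) * E s"
          unfolding Nf_def E_def by (rule sum_abs_sq)
        moreover have "card (Pow idx8) = 256" by (simp add: card_Pow)
        ultimately show ?thesis using M0 by (intro mult_left_mono) auto
      qed
      finally show ?thesis by (simp add: algebra_simps)
    qed
    have E0: "E 0 = 0" using D0 by (simp add: E_def)
    have nn: "0 \<le> E s" for s by (simp add: E_def sum_nonneg)
    have "E t = 0" by (rule energy_zero[OF dE bE E0 nn])
    then have "\<forall>J\<in>Pow idx8. (D t J)\<^sup>2 = 0"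
      unfolding E_def by (subst sum_nonneg_eq_0_iff[symmetric]) auto
    then show ?thesis using True by simp
  qed
qed

theorem mainTheorem12:
  fixes v w :: "nat \<Rightarrow> real" and \<Phi> :: "real \<Rightarrow> form"
  defines "\<Phi> \<equiv> (\<lambda>t. form_add spin7_form
              (form_add (form_scale ((1 - cos (biv_norm v w * t)) / (biv_norm v w)\<^sup>2)
                                    (opB v w (opB v w spin7_form)))
                        (form_scale (sin (biv_norm v w * t) / biv_norm v w)
                                    (opB v w spin7_form))))"
  assumes "biv_norm v w \<noteq> 0"
  shows "\<Phi> 0 = spin7_form
     \<and> (\<forall>t I. ((\<lambda>s. \<Phi> s I) has_real_derivative flow_rhs v w (\<Phi> t) I) (at t))
     \<and> (\<forall>\<Psi> :: real \<Rightarrow> form. \<Psi> 0 = spin7_form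
          \<and> (\<forall>t I. ((\<lambda>s. \<Psi> s I) has_real_derivative flow_rhs v w (\<Psi> t) I) (at t))
          \<longrightarrow> \<Psi> = \<Phi>)
     \<and> (\<exists>T>0. \<forall>t. \<Phi> (t + T) = \<Phi> t)"
proof -
  define l where "l = biv_norm v w"
  have l0: "l \<noteq> 0" using assms(2) by (simp add: l_def)
  have lpos: "0 < l" using l0 unfolding l_def biv_norm_def form_norm_def by (simp add: sum_nonneg order_less_le)
  define B1 where "B1 = opB v w spin7_form"
  define B2 where "B2 = opB v w B1"
  have h0: "hom 4 spin7_form" by (rule hom_spin7)
  have h1: "hom 4 B1" using hom_B[of 3 spin7_form v w] h0 by (simp add: B1_def numeral_eq_Suc)
  have h2: "hom 4 B2" using hom_B[of 3 B1 v w] h1 by (simp add: B2_def numeral_eq_Suc)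
  have s1: "hodge B1 = B1" using hodge_B[OF h0] hodge_spin7 by (simp add: B1_def)
  have s2: "hodge B2 = B2" using hodge_B[OF h1] s1 by (simp add: B2_def)
  have L0: "flow_rhs v w spin7_form = B1" using L_eq[OF h0] hodge_spin7 by (simp add: B1_def)
  have L1: "flow_rhs v w B1 = B2" using L_eq[OF h1] s1 by (simp add: B2_def)
  have L2: "flow_rhs v w B2 = - Kc (l\<^sup>2) * B1"
  proof -
    have "flow_rhs v w B2 = opB v w B2" using L_eq[OF h2] s2 by simp
    also have "\<dots> = opB v w (opB v w (opB v w spin7_form))" by (simp add: B2_def B1_def)
    also have "\<dots> = - Kc (dotp v v * dotp w w - dotp v w * dotp v w) * B1"
      unfolding B3 B1_def by (simp add: Kc_simps)
    also have "dotp v v * dotp w w - dotp v w * dotp v w = l\<^sup>2"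
      unfolding l_def biv_norm_sq by (simp add: power2_eq_square)
    finally show ?thesis .
  qed
  have Phi_eq: "\<Phi> t = spin7_form + Kc ((1 - cos (l * t)) / l\<^sup>2) * B2 + Kc (sin (l * t) / l) * B1" for t
    unfolding \<Phi>_def form_ops l_def[symmetric] B1_def[symmetric] B2_def[symmetric] by (simp add: add.assoc)
  have Phi_pt: "\<Phi> t I = spin7_form I + (1 - cos (l * t)) / l\<^sup>2 * B2 I + sin (l * t) / l * B1 I" for t I
    unfolding Phi_eq by simp
  have flow_Phi: "flow_rhs v w (\<Phi> t) I = B1 I - (1 - cos (l * t)) / l\<^sup>2 * l\<^sup>2 * B1 I + sin (l * t) / l * B2 I" for t I
    unfolding Phi_eq flow_lin L0 L1 L2 by (simp add: algebra_simps)
  have part1: "\<Phi> 0 = spin7_form"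
    by (rule ext) (simp add: Phi_pt)
  have part2: "\<forall>t I. ((\<lambda>s. \<Phi> s I) has_real_derivative flow_rhs v w (\<Phi> t) I) (at t)"
  proof (intro allI)
    fix t I
    have "((\<lambda>s. spin7_form I + (1 - cos (l * s)) / l\<^sup>2 * B2 I + sin (l * s) / l * B1 I) has_real_derivative
        (sin (l * t) / l * B2 I + cos (l * t) * B1 I)) (at t)"
      using l0 by (auto intro!: derivative_eq_intros simp: field_simps power2_eq_square)
    moreover have "sin (l * t) / l * B2 I + cos (l * t) * B1 I = flow_rhs v w (\<Phi> t) I"
    proof -
      have c: "(1 - cos (l * t)) / l\<^sup>2 * l\<^sup>2 = 1 - cos (l * t)" using l0 by simp
      show ?thesis unfolding flow_Phi c by (simp add: algebra_simps)
    qed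
    ultimately show "((\<lambda>s. \<Phi> s I) has_real_derivative flow_rhs v w (\<Phi> t) I) (at t)"
      unfolding Phi_pt by simp
  qed
  have part3: "\<forall>\<Psi> :: real \<Rightarrow> form. \<Psi> 0 = spin7_form
          \<and> (\<forall>t I. ((\<lambda>s. \<Psi> s I) has_real_derivative flow_rhs v w (\<Psi> t) I) (at t))
          \<longrightarrow> \<Psi> = \<Phi>"
  proof (intro allI impI)
    fix \<Psi> :: "real \<Rightarrow> form"
    assume a: "\<Psi> 0 = spin7_form \<and> (\<forall>t I. ((\<lambda>s. \<Psi> s I) has_real_derivative flow_rhs v w (\<Psi> t) I) (at t))"
    define D where "D s = \<Psi> s - \<Phi> s" for s
    have dD: "\<forall>t I. ((\<lambda>s. D s I) has_real_derivative flow_rhs v w (D t) I) (at t)"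
    proof (intro allI)
      fix t I
      have "((\<lambda>s. \<Psi> s I - \<Phi> s I) has_real_derivative flow_rhs v w (\<Psi> t) I - flow_rhs v w (\<Phi> t) I) (at t)"
        using a part2 by (intro DERIV_diff) auto
      then show "((\<lambda>s. D s I) has_real_derivative flow_rhs v w (D t) I) (at t)"
        by (simp add: D_def flow_lin)
    qed
    have "D 0 = 0" using a part1 by (simp add: D_def)
    then have "\<And>t. D t = 0" using ode_unique[OF dD] by blast
    then show "\<Psi> = \<Phi>" by (auto simp: D_def fun_eq_iff)
  qed
  have part4: "\<exists>T>0. \<forall>t. \<Phi> (t + T) = \<Phi> t"
  proof (intro exI conjI allI)
    show "0 < 2 * pi / l" using lpos by simp
    fix t
    have "l * (t + 2 * pi / l) = l * t + 2 * pi" using l0 by (simp add: field_simps)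
    then show "\<Phi> (t + 2 * pi / l) = \<Phi> t"
      unfolding Phi_eq by (simp add: sin_add cos_add)
  qed
  show ?thesis using part1 part2 part3 part4 by blast
qed

end
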